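(* Let $(E,\rho)$ be a Polish metric space and $\Psi=\{\Psi(t)\}_{t\geq0}$ an $E$-valued time-homogeneous Markov process with transition semigroup $\{P(t)\}_{t\geq 0}$ and initial distribution $\mu$ on $(\Omega,\mathcal{F},\mathbb{P}_\mu)$. Let $V:E\to[0,\infty)$ be continuous and assume: (a) $\{P(t)\}$ has a unique invariant probability measure $\mu_*$, and there are $\gamma>0$ and $C:\{\nu\in\mathcal{M}_1(E):\int V\,d\nu<\infty\}\to[0,\infty)$ with $d_{\mathrm{FM}}(\nu P(t),\mu_* )\leq C(\nu)e^{-\gamma t}$ for all $t\geq0$ and such $\nu$, where $C(\delta_x)=\varkappa(V(x)+1)^{1/2}$ for some $\varkappa>0$; (b) there exist $A,B\geq 0$, $\Gamma>0$ with $P(t)V^2(x)\leq Ae^{-\Gamma t}V^2(x)+B$ for all $x,t$; (c) $\int_E V^2\,d\mu<\infty$. Fix $g\in\operatorname{Lip}_b(E)$, let $\bar g=g-\int g\,d\mu_*$, $\chi(x)=\int_0^\infty P(t)\bar g(x)\,dt$, and $R(t)=t^{-1/2}(\chi(\Psi(0))-\chi(\Psi(t)))$ for $t>0$. Then $R(t)\to 0$ in $\mathcal{L}^1(\mathbb{P}_\mu)$ as $t\to\infty$.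
   Context: $\mathcal{M}_1(E)$: Borel probability measures; $\operatorname{Lip}_b(E)$: bounded Lipschitz functions with $\|f\|_{\mathrm{BL}}=\max\{\|f\|_\infty,\sup_{x\neq y}|f(x)-f(y)|/\rho(x,y)\}$; $d_{\mathrm{FM}}(\mu,\nu)=\sup\{|\int f\,d\mu-\int f\,d\nu|:\|f\|_{\mathrm{BL}}\leq1\}$. $P(t)f(x)=\int f(y)P(t)(x,dy)$, $\nu P(t)=\int P(t)(x,\cdot)\nu(dx)$; $\Psi(0)\sim\mu$ and $\mathbb{P}_\mu(\Psi(s+t)\in A\mid\mathcal{F}(s))=P(t)(\Psi(s),A)$ for the natural filtration. *)

theory Defs
  imports "HOL-Probability.Probability"
begin

definition Pop :: "(real \<Rightarrow> 'a::topological_space \<Rightarrow> 'a measure) \<Rightarrow> real \<Rightarrow> ('a \<Rightarrow> real) \<Rightarrow> 'a \<Rightarrow> real"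
  where "Pop P t f x = (\<integral>y. f y \<partial>(P t x))"

definition act :: "'a measure \<Rightarrow> (real \<Rightarrow> 'a \<Rightarrow> 'a measure) \<Rightarrow> real \<Rightarrow> 'a measure"
  where "act \<nu> P t = bind \<nu> (P t)"

definition M1 :: "'a::topological_space measure set"
  where "M1 = {\<nu>. prob_space \<nu> \<and> sets \<nu> = sets borel}"

definition BL1 :: "('a::metric_space \<Rightarrow> real) \<Rightarrow> bool"
  where "BL1 f \<longleftrightarrow> (\<forall>x. \<bar>f x\<bar> \<le> 1) \<and> (\<forall>x y. \<bar>f x - f y\<bar> \<le> dist x y)"

definition d_FM :: "'a::metric_space measure \<Rightarrow> 'a measure \<Rightarrow> real"
  where "d_FM \<nu> \<mu> = (SUP f\<in>{f. BL1 f}. \<bar>(\<integral>x. f x \<partial>\<nu>) - (\<integral>x. f x \<partial>\<mu>)\<bar>)"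

definition Lip_b :: "('a::metric_space \<Rightarrow> real) \<Rightarrow> bool"
  where "Lip_b f \<longleftrightarrow> bounded (range f) \<and> (\<exists>L. \<forall>x y. \<bar>f x - f y\<bar> \<le> L * dist x y)"

definition nat_filt :: "'b measure \<Rightarrow> (real \<Rightarrow> 'b \<Rightarrow> 'a::topological_space) \<Rightarrow> real \<Rightarrow> 'b measure"
  where "nat_filt M \<Psi> s = sigma (space M)
     (\<Union>u\<in>{0..s}. {\<Psi> u -` A \<inter> space M | A. A \<in> sets borel})"

definition markov_process ::
  "'b measure \<Rightarrow> (real \<Rightarrow> 'b \<Rightarrow> 'a::topological_space) \<Rightarrow> (real \<Rightarrow> 'a \<Rightarrow> 'a measure) \<Rightarrow> 'a measure \<Rightarrow> bool"
  where "markov_process M \<Psi> P \<mu> \<longleftrightarrow>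
     prob_space M \<and>
     (\<forall>t\<ge>0. \<Psi> t \<in> M \<rightarrow>\<^sub>M borel) \<and>
     distr M borel (\<Psi> 0) = \<mu> \<and>
     (\<forall>s\<ge>0. \<forall>t\<ge>0. \<forall>A\<in>sets borel.
        AE \<omega> in M. real_cond_exp M (nat_filt M \<Psi> s) (indicator {\<omega>\<in>space M. \<Psi> (s+t) \<omega> \<in> A}) \<omega>
                   = measure (P t (\<Psi> s \<omega>)) A)"

definition transition_semigroup :: "(real \<Rightarrow> 'a::topological_space \<Rightarrow> 'a measure) \<Rightarrow> bool"
  where "transition_semigroup P \<longleftrightarrow>
     (\<lambda>(t,x). P t x) \<in> (restrict_space borel {0..} \<Otimes>\<^sub>M borel) \<rightarrow>\<^sub>M prob_algebra borel \<and>
     (\<forall>x. P 0 x = return borel x) \<and>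
     (\<forall>s\<ge>0. \<forall>t\<ge>0. \<forall>x. P (s+t) x = bind (P s x) (P t))"

definition invariant :: "(real \<Rightarrow> 'a::topological_space \<Rightarrow> 'a measure) \<Rightarrow> 'a measure \<Rightarrow> bool"
  where "invariant P \<nu> \<longleftrightarrow> \<nu> \<in> M1 \<and> (\<forall>t\<ge>0. act \<nu> P t = \<nu>)"

end

theory Submission
  imports Defs
begin

lemma lip_cont:
  fixes f :: "'a::metric_space \<Rightarrow> real"
  assumes "\<forall>x y. \<bar>f x - f y\<bar> \<le> L * dist x y"
  shows "continuous_on UNIV f"
proof -
  have "lipschitz_on (max L 1) UNIV f"
    unfolding lipschitz_on_def
  proof (intro conjI ballI)
    fix x y :: 'a
    have "\<bar>f x - f y\<bar> \<le> L * dist x y" using assms by auto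
    also have "\<dots> \<le> max L 1 * dist x y" by (intro mult_right_mono) auto
    finally show "dist (f x) (f y) \<le> max L 1 * dist x y" by (simp add: dist_real_def)
  qed auto
  then show ?thesis using lipschitz_on_continuous_on by blast
qed

lemma sg_meas:
  assumes sg: "transition_semigroup P" and t: "t \<ge> 0"
  shows "P t \<in> borel \<rightarrow>\<^sub>M prob_algebra borel"
proof -
  have j: "(\<lambda>(t,x). P t x) \<in> (restrict_space borel {0..} \<Otimes>\<^sub>M borel) \<rightarrow>\<^sub>M prob_algebra borel"
    using sg unfolding transition_semigroup_def by auto
  have "(\<lambda>x. (t, x)) \<in> borel \<rightarrow>\<^sub>M (restrict_space borel {0..} \<Otimes>\<^sub>M borel)"
    using t by (intro measurable_Pair measurable_const) (auto simp: space_restrict_space)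
  from measurable_compose[OF this j] show ?thesis by simp
qed

lemma sg_prob:
  assumes sg: "transition_semigroup P" and t: "t \<ge> 0"
  shows "prob_space (P t x)" "sets (P t x) = sets borel" "space (P t x) = UNIV"
proof -
  have "P t x \<in> space (prob_algebra borel)"
    using measurable_space[OF sg_meas[OF sg t]] by auto
  then show "prob_space (P t x)" "sets (P t x) = sets borel" "space (P t x) = UNIV"
    by (auto simp: space_prob_algebra dest: sets_eq_imp_space_eq)
qed

lemma bounded_int:
  fixes f :: "'a::metric_space \<Rightarrow> real"
  assumes ps: "prob_space N" and sN: "sets N = sets borel"
    and fm: "f \<in> borel_measurable borel" and b: "\<forall>x. \<bar>f x\<bar> \<le> K"
  shows "integrable N f" "\<bar>\<integral>x. f x \<partial>N\<bar> \<le> K"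
proof -
  interpret prob_space N by (rule ps)
  have fm': "f \<in> borel_measurable N" using fm measurable_cong_sets[OF sN refl] by blast
  show i: "integrable N f"
    by (rule integrable_const_bound[where B=K]) (use b fm' in auto)
  have "\<bar>\<integral>x. f x \<partial>N\<bar> \<le> (\<integral>x. \<bar>f x\<bar> \<partial>N)" by (rule integral_abs_bound)
  also have "\<dots> \<le> (\<integral>x. K \<partial>N)"
    by (rule integral_mono) (use i b in auto)
  also have "\<dots> = K" by (simp add: prob_space)
  finally show "\<bar>\<integral>x. f x \<partial>N\<bar> \<le> K" .
qed

lemma BL1_meas: "BL1 f \<Longrightarrow> f \<in> borel_measurable borel"
  unfolding BL1_def
  by (intro borel_measurable_continuous_onI lip_cont[where L=1]) auto

lemma dFM_ge:
  assumes "prob_space N" "sets N = sets borel" "prob_space N'" "sets N' = sets borel" "BL1 f"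
  shows "\<bar>(\<integral>x. f x \<partial>N) - (\<integral>x. f x \<partial>N')\<bar> \<le> d_FM N N'"
  unfolding d_FM_def
proof (rule cSUP_upper)
  show "f \<in> {f. BL1 f}" using assms by auto
  show "bdd_above ((\<lambda>f. \<bar>(\<integral>x. f x \<partial>N) - (\<integral>x. f x \<partial>N')\<bar>) ` {f. BL1 f})"
  proof (rule bdd_aboveI2[where M=2])
    fix h :: "'a \<Rightarrow> real" assume "h \<in> {f. BL1 f}"
    then have h: "BL1 h" by auto
    have b: "\<forall>x. \<bar>h x\<bar> \<le> 1" using h unfolding BL1_def by auto
    have "\<bar>\<integral>x. h x \<partial>N\<bar> \<le> 1" "\<bar>\<integral>x. h x \<partial>N'\<bar> \<le> 1"
      using bounded_int(2)[OF assms(1,2) BL1_meas[OF h] b] bounded_int(2)[OF assms(3,4) BL1_meas[OF h] b] by auto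
    then show "\<bar>(\<integral>x. h x \<partial>N) - (\<integral>x. h x \<partial>N')\<bar> \<le> 2" by linarith
  qed
qed

lemma Pop_bound:
  fixes g :: "'a::metric_space \<Rightarrow> real"
  assumes sg: "transition_semigroup P" and t: "t \<ge> 0"
    and mus: "prob_space mus" "sets mus = sets borel"
    and gm: "g \<in> borel_measurable borel" and gK: "\<forall>x. \<bar>g x\<bar> \<le> K" and gL: "\<forall>x y. \<bar>g x - g y\<bar> \<le> L * dist x y"
  shows "\<bar>Pop P t (\<lambda>x. g x - (\<integral>y. g y \<partial>mus)) x\<bar> \<le> max 1 (max K L) * d_FM (P t x) mus"
proof -
  define c where "c = max 1 (max K L)"
  have c1: "c \<ge> 1" unfolding c_def by auto
  note ps = sg_prob[OF sg t, of x]
  have ig: "integrable (P t x) g" using bounded_int(1)[OF ps(1,2) gm gK] .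
  interpret pt: prob_space "P t x" by (rule ps(1))
  have "Pop P t (\<lambda>x. g x - (\<integral>y. g y \<partial>mus)) x = (\<integral>y. g y \<partial>P t x) - (\<integral>y. g y \<partial>mus)"
    unfolding Pop_def using ig by (simp add: pt.prob_space)
  define f where "f y = g y / c" for y
  have BL: "BL1 f" unfolding BL1_def f_def
  proof (intro conjI allI)
    fix x y
    have "\<bar>g x\<bar> \<le> c" using gK[rule_format, of x] unfolding c_def by linarith
    then show "\<bar>g x / c\<bar> \<le> 1" using c1 by simp
    have "\<bar>g x - g y\<bar> \<le> L * dist x y" using gL by auto
    also have "\<dots> \<le> c * dist x y" by (intro mult_right_mono) (auto simp: c_def)
    finally show "\<bar>g x / c - g y / c\<bar> \<le> dist x y" using c1
      by (simp add: diff_divide_distrib[symmetric] divide_le_eq mult.commute)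
  qed
  have "\<bar>(\<integral>y. f y \<partial>P t x) - (\<integral>y. f y \<partial>mus)\<bar> \<le> d_FM (P t x) mus"
    by (rule dFM_ge[OF ps(1,2) mus BL])
  moreover have "(\<integral>y. f y \<partial>P t x) = (\<integral>y. g y \<partial>P t x) / c" "(\<integral>y. f y \<partial>mus) = (\<integral>y. g y \<partial>mus) / c"
    unfolding f_def by auto
  ultimately have "\<bar>(\<integral>y. g y \<partial>P t x) - (\<integral>y. g y \<partial>mus)\<bar> / c \<le> d_FM (P t x) mus"
    using c1 by (simp add: diff_divide_distrib[symmetric])
  then have "\<bar>(\<integral>y. g y \<partial>P t x) - (\<integral>y. g y \<partial>mus)\<bar> \<le> c * d_FM (P t x) mus"
    using c1 by (simp add: divide_le_eq mult.commute)
  then show ?thesis unfolding c_def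
    using \<open>Pop P t _ x = _\<close> by simp
qed

lemma expdens:
  assumes l: "(l::real) > 0"
  shows "integrable lborel (exponential_density l)" "(\<integral>x. exponential_density l x \<partial>lborel) = 1"
proof -
  interpret prob_space "density lborel (exponential_density l)"
    by (rule prob_space_exponential_density[OF l])
  have nn: "\<And>x. exponential_density l x \<ge> 0" using exponential_density_nonneg[OF l] .
  have "emeasure (density lborel (exponential_density l)) UNIV = 1"
    using emeasure_space_1 by simp
  then have e: "(\<integral>\<^sup>+x. ennreal (exponential_density l x) \<partial>lborel) = 1"
    by (simp add: emeasure_density)
  have m: "exponential_density l \<in> borel_measurable lborel" by simp
  show i: "integrable lborel (exponential_density l)"
    using e nn by (intro integrableI_nonneg) auto
  show "(\<integral>x. exponential_density l x \<partial>lborel) = 1"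
    using integral_eq_nn_integral[OF m] e nn by simp
qed

lemma setint_bound:
  fixes h :: "real \<Rightarrow> real"
  assumes l: "l > 0" and b: "\<forall>t\<ge>0. \<bar>h t\<bar> \<le> B * exp (- l * t)"
  shows "\<bar>set_lebesgue_integral lborel {0..} h\<bar> \<le> B / l"
proof -
  have B0: "B \<ge> 0" using b[rule_format, of 0] by auto
  show ?thesis
  proof (cases "set_integrable lborel {0..} h")
    case False
    then show ?thesis unfolding set_lebesgue_integral_def set_integrable_def
      using B0 l by (simp add: not_integrable_integral_eq)
  next
    case True
    have "\<bar>\<integral>x. indicator {0..} x *\<^sub>R h x \<partial>lborel\<bar> \<le> (\<integral>x. (B / l) * exponential_density l x \<partial>lborel)"
    proof (rule integral_abs_bound_integral)
      show "integrable lborel (\<lambda>x. indicator {0..} x *\<^sub>R h x)" using True unfolding set_integrable_def .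
      show "integrable lborel (\<lambda>x. (B / l) * exponential_density l x)" using expdens(1)[OF l] by simp
      fix x :: real
      show "\<bar>indicator {0..} x *\<^sub>R h x\<bar> \<le> B / l * exponential_density l x"
      proof (cases "x \<ge> 0")
        case True
        then show ?thesis using b[rule_format, OF True] l
          by (simp add: exponential_density_def mult.commute)
      next
        case False
        then show ?thesis by (simp add: exponential_density_def)
      qed
    qed
    also have "\<dots> = B / l" using expdens(2)[OF l] by simp
    finally show ?thesis unfolding set_lebesgue_integral_def .
  qed
qed

lemma chi_meas:
  fixes h :: "'a::topological_space \<Rightarrow> real"
  assumes sg: "transition_semigroup P" and hm: "h \<in> borel_measurable borel"
  shows "(\<lambda>x. set_lebesgue_integral lborel {0..} (\<lambda>t. Pop P t h x)) \<in> borel_measurable borel"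
proof -
  have j: "(\<lambda>(t,x). P t x) \<in> (restrict_space borel {0..} \<Otimes>\<^sub>M borel) \<rightarrow>\<^sub>M prob_algebra borel"
    using sg unfolding transition_semigroup_def by auto
  have p: "(\<lambda>z::'a \<times> real. (max 0 (snd z), fst z)) \<in> (borel \<Otimes>\<^sub>M lborel) \<rightarrow>\<^sub>M (restrict_space borel {0..} \<Otimes>\<^sub>M borel)"
    apply (rule measurable_Pair)
    apply (rule measurable_restrict_space2)
    apply (auto simp: space_pair_measure)
    done
  have q: "(\<lambda>(x,t). P (max 0 t) x) \<in> (borel \<Otimes>\<^sub>M lborel) \<rightarrow>\<^sub>M subprob_algebra borel"
    using measurable_prob_algebraD[OF measurable_compose[OF p j]] by (simp add: case_prod_beta')
  have r: "(\<lambda>(x,t). Pop P (max 0 t) h x) \<in> borel_measurable (borel \<Otimes>\<^sub>M lborel)"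
    unfolding Pop_def
    using measurable_compose[OF q integral_measurable_subprob_algebra[OF hm]] by (simp add: case_prod_beta')
  have r2: "(\<lambda>(x,t). indicator {0..} t *\<^sub>R Pop P (max 0 t) h x) \<in> borel_measurable (borel \<Otimes>\<^sub>M lborel)"
    using r by measurable
  have "(\<lambda>x. \<integral>t. indicator {0..} t *\<^sub>R Pop P (max 0 t) h x \<partial>lborel) \<in> borel_measurable borel"
    by (rule lborel.borel_measurable_lebesgue_integral) (use r2 in \<open>simp add: case_prod_beta'\<close>)
  moreover have "(\<integral>t. indicator {0..} t *\<^sub>R Pop P (max 0 t) h x \<partial>lborel) = set_lebesgue_integral lborel {0..} (\<lambda>t. Pop P t h x)" for x
    unfolding set_lebesgue_integral_def
    by (intro Bochner_Integration.integral_cong) (auto simp: indicator_def)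
  ultimately show ?thesis by simp
qed

lemma meas_P_set:
  assumes sg: "transition_semigroup P" and t: "t \<ge> 0" and A: "A \<in> sets borel"
  shows "(\<lambda>x. measure (P t x) A) \<in> borel_measurable borel"
proof -
  have "P t \<in> borel \<rightarrow>\<^sub>M subprob_algebra borel"
    using measurable_prob_algebraD[OF sg_meas[OF sg t]] .
  from measurable_compose[OF this measurable_emeasure_subprob_algebra[OF A]]
  have "(\<lambda>x. emeasure (P t x) A) \<in> borel_measurable borel" by simp
  then show ?thesis unfolding measure_def by measurable
qed

lemma distr_eq:
  assumes sg: "transition_semigroup P" and mp: "markov_process M \<Psi> P \<mu>" and t: "t \<ge> 0"
  shows "distr M borel (\<Psi> t) = bind \<mu> (P t)"
proof -
  have ps: "prob_space M" and m0: "\<Psi> 0 \<in> M \<rightarrow>\<^sub>M borel" and mt: "\<Psi> t \<in> M \<rightarrow>\<^sub>M borel"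
    and d0: "distr M borel (\<Psi> 0) = \<mu>"
    and mk: "\<forall>A\<in>sets borel. AE \<omega> in M. real_cond_exp M (nat_filt M \<Psi> 0) (indicator {\<omega>\<in>space M. \<Psi> (0+t) \<omega> \<in> A}) \<omega>
                   = measure (P t (\<Psi> 0 \<omega>)) A"
    using mp t unfolding markov_process_def by auto
  interpret prob_space M by (rule ps)
  define F where "F = nat_filt M \<Psi> 0"
  define C where "C = (\<Union>u\<in>{0..0::real}. {\<Psi> u -` A \<inter> space M | A. A \<in> sets borel})"
  have CM: "C \<subseteq> sets M" unfolding C_def using m0 by (auto simp: measurable_def)
  have CP: "C \<subseteq> Pow (space M)" using CM sets.sets_into_space by auto
  have subalg: "subalgebra M F"
    unfolding subalgebra_def F_def nat_filt_def C_def[symmetric]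
    using CM CP sets.sigma_sets_subset[OF CM] by (auto simp: sets_measure_of space_measure_of)
  have sfs: "sigma_finite_subalgebra M F"
    by (rule finite_measure_subalgebra_is_sigma_finite)
       (simp add: finite_measure_subalgebra_def finite_measure_subalgebra_axioms_def subalg finite_measure_axioms)
  have sm: "sets \<mu> = sets borel" using d0 by auto
  then have spm: "space \<mu> = UNIV" using sets_eq_imp_space_eq by fastforce
  have Pm: "P t \<in> \<mu> \<rightarrow>\<^sub>M subprob_algebra borel"
    using measurable_prob_algebraD[OF sg_meas[OF sg t]] measurable_cong_sets[OF sm refl] by blast
  show ?thesis
  proof (rule measure_eqI)
    show "sets (distr M borel (\<Psi> t)) = sets (bind \<mu> (P t))"
      using sets_bind[of \<mu> "P t" borel] sg_prob(2)[OF sg t] spm by simp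
    fix A assume "A \<in> sets (distr M borel (\<Psi> t))"
    then have A: "A \<in> sets borel" by simp
    define f :: "_ \<Rightarrow> real" where "f = indicator {\<omega>\<in>space M. \<Psi> t \<omega> \<in> A}"
    have Aset: "{\<omega>\<in>space M. \<Psi> t \<omega> \<in> A} \<in> sets M" using mt A by measurable
    have fi: "integrable M f" unfolding f_def by (rule integrable_real_indicator[OF Aset]) (simp add: emeasure_eq_measure)
    have mPA: "(\<lambda>x. measure (P t x) A) \<in> borel_measurable borel" by (rule meas_P_set[OF sg t A])
    have "(\<integral>\<omega>. f \<omega> \<partial>M) = (\<integral>\<omega>. real_cond_exp M F f \<omega> \<partial>M)"
      using sigma_finite_subalgebra.real_cond_exp_int(2)[OF sfs fi] by simp
    also have "\<dots> = (\<integral>\<omega>. measure (P t (\<Psi> 0 \<omega>)) A \<partial>M)"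
    proof (rule integral_cong_AE)
      show "real_cond_exp M F f \<in> borel_measurable M"
        using borel_measurable_cond_exp2 .
      show "(\<lambda>\<omega>. measure (P t (\<Psi> 0 \<omega>)) A) \<in> borel_measurable M"
        using measurable_compose[OF m0 mPA] by simp
      show "AE \<omega> in M. real_cond_exp M F f \<omega> = measure (P t (\<Psi> 0 \<omega>)) A"
        using mk A unfolding F_def f_def by simp
    qed
    also have "\<dots> = (\<integral>x. measure (P t x) A \<partial>\<mu>)"
      using integral_distr[OF m0 mPA] d0 by simp
    finally have eq: "measure M {\<omega>\<in>space M. \<Psi> t \<omega> \<in> A} = (\<integral>x. measure (P t x) A \<partial>\<mu>)"
      unfolding f_def using Aset by simp
    interpret mu: prob_space \<mu> using d0 prob_space_distr[OF m0] by simp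
    have mPA': "(\<lambda>x. measure (P t x) A) \<in> borel_measurable \<mu>"
      using mPA measurable_cong_sets[OF sm refl] by blast
    have iPA: "integrable \<mu> (\<lambda>x. measure (P t x) A)"
      by (rule mu.integrable_const_bound[where B=1])
         (use mPA' sg_prob[OF sg t] in \<open>auto simp: prob_space.prob_le_1\<close>)
    have "emeasure (distr M borel (\<Psi> t)) A = emeasure M {\<omega>\<in>space M. \<Psi> t \<omega> \<in> A}"
      using mt A by (simp add: emeasure_distr vimage_def Int_def conj_commute)
    also have "\<dots> = ennreal (\<integral>x. measure (P t x) A \<partial>\<mu>)"
      using eq emeasure_eq_measure by simp
    also have "\<dots> = (\<integral>\<^sup>+x. ennreal (measure (P t x) A) \<partial>\<mu>)"
      by (rule nn_integral_eq_integral[symmetric]) (use iPA in auto)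
    also have "\<dots> = (\<integral>\<^sup>+x. emeasure (P t x) A \<partial>\<mu>)"
      using sg_prob[OF sg t] by (simp add: finite_measure.emeasure_eq_measure prob_space_def)
    also have "\<dots> = emeasure (bind \<mu> (P t)) A"
      using emeasure_bind[OF _ Pm A] spm by simp
    finally show "emeasure (distr M borel (\<Psi> t)) A = emeasure (bind \<mu> (P t)) A" .
  qed
qed

lemma moment:
  fixes V :: "'a::topological_space \<Rightarrow> real"
  assumes sg: "transition_semigroup P" and mp: "markov_process M \<Psi> P \<mu>" and t: "t \<ge> 0"
    and Vm: "V \<in> borel_measurable borel"
    and A0: "A0 \<ge> 0" and B0: "B0 \<ge> 0"
    and b: "\<forall>x. \<forall>t\<ge>0. (\<integral>\<^sup>+y. ennreal ((V y)\<^sup>2) \<partial>(P t x)) \<le> ennreal (A0 * exp (- G * t) * (V x)\<^sup>2 + B0)"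
    and G: "G > 0"
    and c: "(\<integral>\<^sup>+x. ennreal ((V x)\<^sup>2) \<partial>\<mu>) = ennreal Q" and Q: "Q \<ge> 0"
  shows "integrable M (\<lambda>\<omega>. (V (\<Psi> t \<omega>))\<^sup>2)" "(\<integral>\<omega>. (V (\<Psi> t \<omega>))\<^sup>2 \<partial>M) \<le> A0 * Q + B0"
proof -
  have ps: "prob_space M" and m0: "\<Psi> 0 \<in> M \<rightarrow>\<^sub>M borel" and mt: "\<Psi> t \<in> M \<rightarrow>\<^sub>M borel"
    and d0: "distr M borel (\<Psi> 0) = \<mu>"
    using mp t unfolding markov_process_def by auto
  have sm: "sets \<mu> = sets borel" using d0 by auto
  interpret mu: prob_space \<mu> using d0 prob_space.prob_space_distr[OF ps m0] by simp
  have Pm: "P t \<in> \<mu> \<rightarrow>\<^sub>M subprob_algebra borel"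
    using measurable_prob_algebraD[OF sg_meas[OF sg t]] measurable_cong_sets[OF sm refl] by blast
  have V2m: "(\<lambda>y. ennreal ((V y)\<^sup>2)) \<in> borel_measurable borel" using Vm by measurable
  have V2m': "(\<lambda>y. ennreal ((V y)\<^sup>2)) \<in> borel_measurable \<mu>" using V2m measurable_cong_sets[OF sm refl] by blast
  have V2md: "(\<lambda>y. ennreal ((V y)\<^sup>2)) \<in> borel_measurable (distr M borel (\<Psi> t))"
    using V2m measurable_cong_sets[OF sets_distr refl, of M borel "\<Psi> t" borel] by simp
  have "(\<integral>\<^sup>+\<omega>. ennreal ((V (\<Psi> t \<omega>))\<^sup>2) \<partial>M) = (\<integral>\<^sup>+y. ennreal ((V y)\<^sup>2) \<partial>distr M borel (\<Psi> t))"
    using nn_integral_distr[OF mt V2md] by simp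
  also have "\<dots> = (\<integral>\<^sup>+y. ennreal ((V y)\<^sup>2) \<partial>bind \<mu> (P t))" using distr_eq[OF sg mp t] by simp
  also have "\<dots> = (\<integral>\<^sup>+x. \<integral>\<^sup>+y. ennreal ((V y)\<^sup>2) \<partial>P t x \<partial>\<mu>)" by (rule nn_integral_bind[OF V2m Pm])
  also have "\<dots> \<le> (\<integral>\<^sup>+x. ennreal (A0 * (V x)\<^sup>2 + B0) \<partial>\<mu>)"
  proof (rule nn_integral_mono)
    fix x
    have "A0 * exp (- G * t) * (V x)\<^sup>2 \<le> A0 * (V x)\<^sup>2"
      using A0 G t by (intro mult_right_mono) (auto intro: mult_left_le)
    then have "ennreal (A0 * exp (- G * t) * (V x)\<^sup>2 + B0) \<le> ennreal (A0 * (V x)\<^sup>2 + B0)"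
      by (intro ennreal_leI) simp
    note h = this
    show "(\<integral>\<^sup>+y. ennreal ((V y)\<^sup>2) \<partial>P t x) \<le> ennreal (A0 * (V x)\<^sup>2 + B0)"
      using order_trans[OF b[rule_format, OF t] h] .
  qed
  also have "\<dots> = (\<integral>\<^sup>+x. ennreal A0 * ennreal ((V x)\<^sup>2) + ennreal B0 \<partial>\<mu>)"
    using A0 B0 by (intro nn_integral_cong) (simp add: ennreal_plus ennreal_mult)
  also have "\<dots> = ennreal A0 * (\<integral>\<^sup>+x. ennreal ((V x)\<^sup>2) \<partial>\<mu>) + ennreal B0"
    using nn_integral_add[of "\<lambda>x. ennreal A0 * ennreal ((V x)\<^sup>2)" \<mu> "\<lambda>x. ennreal B0"]
      nn_integral_cmult[OF V2m', of "ennreal A0"] V2m' mu.emeasure_space_1 by simp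
  also have "\<dots> = ennreal (A0 * Q + B0)"
    using c A0 B0 Q by (simp add: ennreal_plus ennreal_mult)
  finally have nn: "(\<integral>\<^sup>+\<omega>. ennreal ((V (\<Psi> t \<omega>))\<^sup>2) \<partial>M) \<le> ennreal (A0 * Q + B0)" .
  have meas: "(\<lambda>\<omega>. (V (\<Psi> t \<omega>))\<^sup>2) \<in> borel_measurable M" using mt Vm by measurable
  show "integrable M (\<lambda>\<omega>. (V (\<Psi> t \<omega>))\<^sup>2)"
    by (intro integrableI_nonneg[OF meas]) (auto intro: le_less_trans[OF nn])
  have "(\<integral>\<omega>. (V (\<Psi> t \<omega>))\<^sup>2 \<partial>M) = enn2real (\<integral>\<^sup>+\<omega>. ennreal ((V (\<Psi> t \<omega>))\<^sup>2) \<partial>M)"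
    using integral_eq_nn_integral[OF meas] by simp
  also have "\<dots> \<le> enn2real (ennreal (A0 * Q + B0))"
    by (rule enn2real_mono[OF nn]) simp
  also have "\<dots> = A0 * Q + B0" using A0 B0 Q by (intro enn2real_ennreal) simp
  finally show "(\<integral>\<omega>. (V (\<Psi> t \<omega>))\<^sup>2 \<partial>M) \<le> A0 * Q + B0" .
qed

theorem lemma3p6:
  fixes M :: "'b measure"
    and \<Psi> :: "real \<Rightarrow> 'b \<Rightarrow> 'a::polish_space"
    and P :: "real \<Rightarrow> 'a \<Rightarrow> 'a measure"
    and \<mu> \<mu>s :: "'a measure"
    and V g :: "'a \<Rightarrow> real"
  assumes sg: "transition_semigroup P"
    and mp: "markov_process M \<Psi> P \<mu>"
    and V_cont: "continuous_on UNIV V" and V_nn: "\<forall>x. V x \<ge> 0"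
    and a_inv: "invariant P \<mu>s"
    and a_uniq: "\<forall>\<nu>. invariant P \<nu> \<longrightarrow> \<nu> = \<mu>s"
    and a_conv: "\<exists>\<gamma>>0. \<exists>C :: 'a measure \<Rightarrow> real. \<exists>\<kappa>>0.
        (\<forall>\<nu>\<in>M1. (\<integral>\<^sup>+x. ennreal (V x) \<partial>\<nu>) < \<infinity> \<longrightarrow> C \<nu> \<ge> 0 \<and>
            (\<forall>t\<ge>0. d_FM (act \<nu> P t) \<mu>s \<le> C \<nu> * exp (- \<gamma> * t))) \<and>
        (\<forall>x. C (return borel x) = \<kappa> * sqrt (V x + 1))"
    and b: "\<exists>A\<ge>0. \<exists>B\<ge>0. \<exists>\<Gamma>>0. \<forall>x. \<forall>t\<ge>0.
        (\<integral>\<^sup>+y. ennreal ((V y)\<^sup>2) \<partial>(P t x)) \<le> ennreal (A * exp (- \<Gamma> * t) * (V x)\<^sup>2 + B)"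
    and c: "(\<integral>\<^sup>+x. ennreal ((V x)\<^sup>2) \<partial>\<mu>) < \<infinity>"
    and g: "Lip_b g"
  shows "let gbar = (\<lambda>x. g x - (\<integral>y. g y \<partial>\<mu>s));
             chi = (\<lambda>x. set_lebesgue_integral lborel {0..} (\<lambda>t. Pop P t gbar x));
             R = (\<lambda>t \<omega>. (chi (\<Psi> 0 \<omega>) - chi (\<Psi> t \<omega>)) / sqrt t)
         in (\<forall>\<^sub>F t in at_top. integrable M (R t)) \<and>
            ((\<lambda>t. \<integral>\<omega>. \<bar>R t \<omega>\<bar> \<partial>M) \<longlongrightarrow> 0) at_top"
proof -
  obtain \<gamma> C \<kappa> where gam: "\<gamma> > 0" and kap: "\<kappa> > 0"
    and Cb: "\<forall>\<nu>\<in>M1. (\<integral>\<^sup>+x. ennreal (V x) \<partial>\<nu>) < \<infinity> \<longrightarrow> C \<nu> \<ge> 0 \<and>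
            (\<forall>t\<ge>0. d_FM (act \<nu> P t) \<mu>s \<le> C \<nu> * exp (- \<gamma> * t))"
    and Cx: "\<forall>x. C (return borel x) = \<kappa> * sqrt (V x + 1)"
    using a_conv by blast
  obtain A0 B0 \<Gamma> where A0: "A0 \<ge> 0" and B0: "B0 \<ge> 0" and Gam: "\<Gamma> > 0"
    and bb: "\<forall>x. \<forall>t\<ge>0. (\<integral>\<^sup>+y. ennreal ((V y)\<^sup>2) \<partial>(P t x)) \<le> ennreal (A0 * exp (- \<Gamma> * t) * (V x)\<^sup>2 + B0)"
    using b by blast
  have mus: "prob_space \<mu>s" "sets \<mu>s = sets borel" using a_inv unfolding invariant_def M1_def by auto
  obtain K where gK: "\<forall>x. \<bar>g x\<bar> \<le> K" using g unfolding Lip_b_def bounded_iff by auto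
  obtain L where gL: "\<forall>x y. \<bar>g x - g y\<bar> \<le> L * dist x y" using g unfolding Lip_b_def by auto
  have gm: "g \<in> borel_measurable borel"
    by (intro borel_measurable_continuous_onI lip_cont[OF gL])
  have Vm: "V \<in> borel_measurable borel"
    by (intro borel_measurable_continuous_onI V_cont)
  have conv: "d_FM (P t x) \<mu>s \<le> \<kappa> * sqrt (V x + 1) * exp (- \<gamma> * t)" if t: "t \<ge> 0" for t x
  proof -
    have "return borel x \<in> M1" unfolding M1_def by (auto intro: prob_space_return)
    moreover have "(\<integral>\<^sup>+y. ennreal (V y) \<partial>return borel x) < \<infinity>"
      using nn_integral_return[of x borel "\<lambda>y. ennreal (V y)"] Vm by simp
    ultimately have "d_FM (act (return borel x) P t) \<mu>s \<le> C (return borel x) * exp (- \<gamma> * t)"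
      using Cb t by blast
    moreover have "act (return borel x) P t = P t x"
      unfolding act_def by (rule bind_return[OF measurable_prob_algebraD[OF sg_meas[OF sg t]]]) simp
    ultimately show ?thesis using Cx by simp
  qed
  define gbar where "gbar = (\<lambda>x. g x - (\<integral>y. g y \<partial>\<mu>s))"
  define chi where "chi = (\<lambda>x. set_lebesgue_integral lborel {0..} (\<lambda>t. Pop P t gbar x))"
  define c where "c = max 1 (max K L)"
  define D where "D = c * \<kappa> / \<gamma>"
  have D0: "D \<ge> 0" unfolding D_def c_def using kap gam by auto
  have chib: "\<bar>chi x\<bar> \<le> D * ((V x)\<^sup>2 + 2)" for x
  proof -
    have "\<bar>chi x\<bar> \<le> (c * (\<kappa> * sqrt (V x + 1))) / \<gamma>"
      unfolding chi_def
    proof (rule setint_bound[OF gam], intro allI impI)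
      fix t :: real assume t: "t \<ge> 0"
      have "\<bar>Pop P t gbar x\<bar> \<le> c * d_FM (P t x) \<mu>s"
        unfolding gbar_def c_def by (rule Pop_bound[OF sg t mus gm gK gL])
      also have "\<dots> \<le> c * (\<kappa> * sqrt (V x + 1) * exp (- \<gamma> * t))"
        by (rule mult_left_mono[OF conv[OF t]]) (simp add: c_def)
      finally show "\<bar>Pop P t gbar x\<bar> \<le> c * (\<kappa> * sqrt (V x + 1)) * exp (- \<gamma> * t)"
        by (simp add: mult.assoc)
    qed
    also have "\<dots> = D * sqrt (V x + 1)" unfolding D_def by simp
    also have "\<dots> \<le> D * ((V x)\<^sup>2 + 2)"
    proof (rule mult_left_mono[OF _ D0])
      have v: "V x \<ge> 0" using V_nn by auto
      have "(V x + 1) * 1 \<le> (V x + 1) * (V x + 1)"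
        by (rule mult_left_mono) (use v in auto)
      then have "V x + 1 \<le> (V x + 1)\<^sup>2" by (simp add: power2_eq_square)
      then have "sqrt (V x + 1) \<le> V x + 1"
        using real_sqrt_le_mono[of "V x + 1" "(V x + 1)\<^sup>2"] v by simp
      also have "\<dots> \<le> (V x)\<^sup>2 + 2"
      proof -
        have h: "0 \<le> (V x - 1) * (V x - 1)" by simp
        have "(V x - 1) * (V x - 1) = V x * V x - 2 * V x + 1" by (simp add: algebra_simps)
        then show ?thesis using h v unfolding power2_eq_square by linarith
      qed
      finally show "sqrt (V x + 1) \<le> (V x)\<^sup>2 + 2" .
    qed
    finally show ?thesis .
  qed
  have chim: "chi \<in> borel_measurable borel"
    unfolding chi_def gbar_def by (rule chi_meas[OF sg]) (use gm in measurable)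
  have ps: "prob_space M" and mPsi: "\<And>s. s \<ge> 0 \<Longrightarrow> \<Psi> s \<in> M \<rightarrow>\<^sub>M borel"
    using mp unfolding markov_process_def by auto
  interpret prob_space M by (rule ps)
  define Q where "Q = enn2real (\<integral>\<^sup>+x. ennreal ((V x)\<^sup>2) \<partial>\<mu>)"
  have cQ: "(\<integral>\<^sup>+x. ennreal ((V x)\<^sup>2) \<partial>\<mu>) = ennreal Q" unfolding Q_def using c by simp
  have Q0: "Q \<ge> 0" unfolding Q_def by simp
  define Kb where "Kb = A0 * Q + B0"
  have mI: "integrable M (\<lambda>\<omega>. (V (\<Psi> s \<omega>))\<^sup>2)" "(\<integral>\<omega>. (V (\<Psi> s \<omega>))\<^sup>2 \<partial>M) \<le> Kb" if "s \<ge> 0" for s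
    using moment[OF sg mp that Vm A0 B0 bb Gam cQ Q0] unfolding Kb_def by auto
  define R where "R = (\<lambda>t \<omega>. (chi (\<Psi> 0 \<omega>) - chi (\<Psi> t \<omega>)) / sqrt t)"
  define E where "E = D * (2 * Kb + 4)"
  have main: "integrable M (R t) \<and> (\<integral>\<omega>. \<bar>R t \<omega>\<bar> \<partial>M) \<le> E / sqrt t" if t: "t > 0" for t
  proof -
    have m0: "(\<lambda>\<omega>. chi (\<Psi> 0 \<omega>)) \<in> borel_measurable M" using measurable_compose[OF mPsi chim] by simp
    have mt: "(\<lambda>\<omega>. chi (\<Psi> t \<omega>)) \<in> borel_measurable M" using measurable_compose[OF mPsi chim] t by simp
    have mR: "R t \<in> borel_measurable M" unfolding R_def using m0 mt by measurable
    define H where "H = (\<lambda>\<omega>. (D * ((V (\<Psi> 0 \<omega>))\<^sup>2 + 2) + D * ((V (\<Psi> t \<omega>))\<^sup>2 + 2)) / sqrt t)"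
    have iH: "integrable M H" unfolding H_def using mI[of 0] mI[of t] t
      by (intro integrable_divide integrable_add integrable_mult_right integrable_const) auto
    have Hb: "\<bar>R t \<omega>\<bar> \<le> H \<omega>" for \<omega>
    proof -
      have "\<bar>chi (\<Psi> 0 \<omega>) - chi (\<Psi> t \<omega>)\<bar> \<le> D * ((V (\<Psi> 0 \<omega>))\<^sup>2 + 2) + D * ((V (\<Psi> t \<omega>))\<^sup>2 + 2)"
        using chib[of "\<Psi> 0 \<omega>"] chib[of "\<Psi> t \<omega>"] by linarith
      then show ?thesis unfolding R_def H_def using t by (simp add: abs_div divide_right_mono)
    qed
    have iR: "integrable M (R t)"
      by (rule Bochner_Integration.integrable_bound[OF iH mR]) (use Hb in \<open>auto intro: order_trans[OF _ abs_ge_self]\<close>)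
    have "(\<integral>\<omega>. \<bar>R t \<omega>\<bar> \<partial>M) \<le> (\<integral>\<omega>. H \<omega> \<partial>M)"
      by (rule integral_mono[OF _ iH]) (use iR Hb in auto)
    also have "(\<integral>\<omega>. H \<omega> \<partial>M) = (D * ((\<integral>\<omega>. (V (\<Psi> 0 \<omega>))\<^sup>2 \<partial>M) + 2) + D * ((\<integral>\<omega>. (V (\<Psi> t \<omega>))\<^sup>2 \<partial>M) + 2)) / sqrt t"
    proof -
      have i0: "integrable M (\<lambda>\<omega>. D * ((V (\<Psi> 0 \<omega>))\<^sup>2 + 2))" using mI(1)[of 0] by auto
      have it: "integrable M (\<lambda>\<omega>. D * ((V (\<Psi> t \<omega>))\<^sup>2 + 2))" using mI(1)[of t] t by auto
      have e0: "(\<integral>\<omega>. D * ((V (\<Psi> 0 \<omega>))\<^sup>2 + 2) \<partial>M) = D * ((\<integral>\<omega>. (V (\<Psi> 0 \<omega>))\<^sup>2 \<partial>M) + 2)"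
        using mI(1)[of 0] by (simp add: prob_space)
      have et: "(\<integral>\<omega>. D * ((V (\<Psi> t \<omega>))\<^sup>2 + 2) \<partial>M) = D * ((\<integral>\<omega>. (V (\<Psi> t \<omega>))\<^sup>2 \<partial>M) + 2)"
        using mI(1)[of t] t by (simp add: prob_space)
      show ?thesis unfolding H_def integral_divide_zero
        by (subst Bochner_Integration.integral_add[OF i0 it]) (simp only: e0 et)
    qed
    also have "\<dots> \<le> (D * (Kb + 2) + D * (Kb + 2)) / sqrt t"
      using mI(2)[of 0] mI(2)[of t] t D0
      by (intro divide_right_mono add_mono mult_left_mono) auto
    also have "\<dots> = E / sqrt t" unfolding E_def by (simp add: algebra_simps)
    finally show ?thesis using iR by simp
  qed
  have ev: "\<forall>\<^sub>F t in at_top. integrable M (R t)"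
    using eventually_gt_at_top[of 0] by eventually_elim (use main in auto)
  have lim: "((\<lambda>t. \<integral>\<omega>. \<bar>R t \<omega>\<bar> \<partial>M) \<longlongrightarrow> 0) at_top"
  proof (rule tendsto_sandwich[where f="\<lambda>_. 0" and h="\<lambda>t. E / sqrt t"])
    show "\<forall>\<^sub>F t in at_top. 0 \<le> (\<integral>\<omega>. \<bar>R t \<omega>\<bar> \<partial>M)" by simp
    show "\<forall>\<^sub>F t in at_top. (\<integral>\<omega>. \<bar>R t \<omega>\<bar> \<partial>M) \<le> E / sqrt t"
      using eventually_gt_at_top[of 0] by eventually_elim (use main in auto)
    show "((\<lambda>_. 0) \<longlongrightarrow> (0::real)) at_top" by simp
    show "((\<lambda>t. E / sqrt t) \<longlongrightarrow> 0) at_top"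
      by (rule tendsto_divide_0[OF tendsto_const filterlim_at_top_imp_at_infinity[OF sqrt_at_top]])
  qed
  show ?thesis
    using ev lim unfolding Let_def R_def chi_def gbar_def by (intro conjI)
qed

end
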